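(* Let $\mathcal{P}$ be a profile of unrooted phylogenetic trees whose display graph $G(\mathcal{P})$ is connected. If $F$ is a minimal separator of $\mathrm{LG}(\mathcal{P})$, then $\mathrm{LG}(\mathcal{P})-F'$ is connected for every proper subset $F'\subset F$.
   Context: A phylogenetic tree is an unrooted tree whose leaves are bijectively labeled (leaves identified with labels; internal vertices have degree at least three). A profile $\mathcal{P}=\{T_1,\dots,T_k\}$ is a finite collection of phylogenetic trees; internal vertices of distinct trees are disjoint, while leaves with the same label are the same vertex. The display graph $G(\mathcal{P})$ has vertex set $\bigcup_i V(T_i)$ and edge set $\bigcup_i E(T_i)$. $\mathrm{LG}(\mathcal{P})$ is the line graph of $G(\mathcal{P})$ (vertices are edges of $G(\mathcal{P})$, adjacent iff they share an endpoint). In a graph $G$, for nonadjacent vertices $a,b$, an $a$-$b$ separator is $U\subset V(G)$ with $a,b$ in different components of $G-U$; it is minimal if no proper subset is an $a$-$b$ separator; a minimal separator is a minimal $a$-$b$ separator for some nonadjacent $a,b$. *)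

theory Defs
  imports Main
begin

type_synonym 'a graph = "'a set \<times> 'a set set"

definition verts :: "'a graph \<Rightarrow> 'a set" where "verts G = fst G"
definition edges :: "'a graph \<Rightarrow> 'a set set" where "edges G = snd G"

definition simple_graph :: "'a graph \<Rightarrow> bool" where
  "simple_graph G \<longleftrightarrow> (\<forall>e\<in>edges G. \<exists>u v. u \<noteq> v \<and> e = {u, v} \<and> u \<in> verts G \<and> v \<in> verts G)"

definition adj :: "'a graph \<Rightarrow> 'a \<Rightarrow> 'a \<Rightarrow> bool" where
  "adj G u v \<longleftrightarrow> u \<noteq> v \<and> {u, v} \<in> edges G"

definition reachable :: "'a graph \<Rightarrow> 'a \<Rightarrow> 'a \<Rightarrow> bool" where
  "reachable G u v \<longleftrightarrow> u \<in> verts G \<and> (u, v) \<in> {(x, y). adj G x y}\<^sup>*"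

definition connected_graph :: "'a graph \<Rightarrow> bool" where
  "connected_graph G \<longleftrightarrow> (\<forall>u\<in>verts G. \<forall>v\<in>verts G. reachable G u v)"

definition is_cycle :: "'a graph \<Rightarrow> 'a list \<Rightarrow> bool" where
  "is_cycle G cs \<longleftrightarrow> length cs \<ge> 3 \<and> distinct cs \<and> set cs \<subseteq> verts G \<and>
     (\<forall>i. Suc i < length cs \<longrightarrow> adj G (cs ! i) (cs ! Suc i)) \<and> adj G (last cs) (hd cs)"

definition is_tree :: "'a graph \<Rightarrow> bool" where
  "is_tree G \<longleftrightarrow> simple_graph G \<and> finite (verts G) \<and> verts G \<noteq> {} \<and>
     connected_graph G \<and> (\<nexists>cs. is_cycle G cs)"

definition degree :: "'a graph \<Rightarrow> 'a \<Rightarrow> nat" where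
  "degree G v = card {e \<in> edges G. v \<in> e}"

definition leaves :: "'a graph \<Rightarrow> 'a set" where
  "leaves G = {v \<in> verts G. degree G v \<le> 1}"

definition internal_verts :: "'a graph \<Rightarrow> 'a set" where
  "internal_verts G = verts G - leaves G"

text \<open>Phylogenetic tree: leaves are identified with their labels (so the labelling is the
  identity, trivially bijective); internal vertices have degree at least three.\<close>
definition phylo_tree :: "'a graph \<Rightarrow> bool" where
  "phylo_tree T \<longleftrightarrow> is_tree T \<and> (\<forall>v\<in>internal_verts T. degree T v \<ge> 3)"

text \<open>Profile: a finite collection of phylogenetic trees; two distinct trees share only
  vertices that are leaves in both (same label = same vertex), so internal vertices
  of distinct trees are disjoint.\<close>
definition profile :: "'a graph set \<Rightarrow> bool" where
  "profile P \<longleftrightarrow> finite P \<and> (\<forall>T\<in>P. phylo_tree T) \<and>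
     (\<forall>T\<in>P. \<forall>T'\<in>P. T \<noteq> T' \<longrightarrow> verts T \<inter> verts T' \<subseteq> leaves T \<inter> leaves T')"

definition display_graph :: "'a graph set \<Rightarrow> 'a graph" where
  "display_graph P = (\<Union>T\<in>P. verts T, \<Union>T\<in>P. edges T)"

definition line_graph :: "'a graph \<Rightarrow> 'a set graph" where
  "line_graph G = (edges G, {{e, f} | e f. e \<in> edges G \<and> f \<in> edges G \<and> e \<noteq> f \<and> e \<inter> f \<noteq> {}})"

definition del_verts :: "'a graph \<Rightarrow> 'a set \<Rightarrow> 'a graph" where
  "del_verts G U = (verts G - U, {e \<in> edges G. e \<inter> U = {}})"

definition separator :: "'a graph \<Rightarrow> 'a \<Rightarrow> 'a \<Rightarrow> 'a set \<Rightarrow> bool" where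
  "separator G a b U \<longleftrightarrow> U \<subseteq> verts G \<and> a \<in> verts G - U \<and> b \<in> verts G - U \<and>
     \<not> reachable (del_verts G U) a b"

definition minimal_ab_separator :: "'a graph \<Rightarrow> 'a \<Rightarrow> 'a \<Rightarrow> 'a set \<Rightarrow> bool" where
  "minimal_ab_separator G a b U \<longleftrightarrow> separator G a b U \<and> (\<forall>W. W \<subset> U \<longrightarrow> \<not> separator G a b W)"

definition minimal_separator :: "'a graph \<Rightarrow> 'a set \<Rightarrow> bool" where
  "minimal_separator G U \<longleftrightarrow> (\<exists>a b. a \<in> verts G \<and> b \<in> verts G \<and> a \<noteq> b \<and> \<not> adj G a b \<and>
     minimal_ab_separator G a b U)"

end

theory Submission
  imports Defs
begin

definition LA :: "'a set set \<Rightarrow> 'a set set \<Rightarrow> 'a set \<Rightarrow> 'a set \<Rightarrow> bool" where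
  "LA E U e f \<longleftrightarrow> e \<noteq> f \<and> e \<in> E \<and> f \<in> E \<and> e \<notin> U \<and> f \<notin> U \<and> e \<inter> f \<noteq> {}"

lemma adj_del: "adj (del_verts (line_graph G) U) e f = LA (edges G) U e f"
  unfolding adj_def del_verts_def line_graph_def edges_def LA_def
  by (auto simp: doubleton_eq_iff)

lemma verts_del: "verts (del_verts (line_graph G) U) = edges G - U"
  unfolding verts_def del_verts_def line_graph_def edges_def by auto

lemma Rin: "(a,e) \<in> {(x,y). LA E U x y}\<^sup>* \<Longrightarrow> a \<in> E - U \<Longrightarrow> e \<in> E - U"
  by (induction rule: rtrancl_induct) (auto simp: LA_def)

lemma through:
  assumes "(a,y) \<in> {(x,y). LA E (F-{f}) x y}\<^sup>*" "a \<in> E - F" "f \<in> F"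
  shows "(a,y) \<in> {(x,y). LA E F x y}\<^sup>* \<or> (\<exists>e. (a,e) \<in> {(x,y). LA E F x y}\<^sup>* \<and> e \<inter> f \<noteq> {})"
  using assms(1)
proof (induction rule: rtrancl_induct)
  case base
  then show ?case by simp
next
  case (step y z)
  show ?case
  proof (cases "(a,y) \<in> {(x,y). LA E F x y}\<^sup>*")
    case True
    have y: "y \<in> E - F" using Rin[OF True assms(2)] .
    show ?thesis
    proof (cases "z = f")
      case True
      then show ?thesis using \<open>(a,y) \<in> {(x,y). LA E F x y}\<^sup>*\<close> step(2) by (auto simp: LA_def)
    next
      case False
      then have "LA E F y z" using step(2) y by (auto simp: LA_def)
      then show ?thesis using True by (meson CollectI case_prodI rtrancl.rtrancl_into_rtrancl)
    qed
  next
    case False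
    then show ?thesis using step(3) by blast
  qed
qed

theorem corollary1:
  fixes P :: "'a graph set" and F :: "'a set set"
  assumes "profile P"
    and "connected_graph (display_graph P)"
    and "minimal_separator (line_graph (display_graph P)) F"
  shows "\<forall>F'. F' \<subset> F \<longrightarrow> connected_graph (del_verts (line_graph (display_graph P)) F')"
proof (intro allI impI)
  fix F' assume F'F: "F' \<subset> F"
  define G where "G = display_graph P"
  define E where "E = edges G"
  define RR where "RR U = {(x,y). LA E U x y}" for U
  have simple: "\<forall>e\<in>E. \<exists>u v. u\<noteq>v \<and> e={u,v} \<and> u \<in> verts G \<and> v \<in> verts G"
  proof
    fix e assume "e \<in> E"
    then obtain T where T: "T \<in> P" "e \<in> edges T"
      unfolding E_def G_def display_graph_def edges_def by auto
    then have "simple_graph T" using assms(1)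
      unfolding profile_def phylo_tree_def is_tree_def by auto
    then obtain u v where "u\<noteq>v" "e={u,v}" "u \<in> verts T" "v \<in> verts T"
      using T(2) unfolding simple_graph_def by blast
    moreover have "verts T \<subseteq> verts G" using T(1)
      unfolding G_def display_graph_def verts_def by auto
    ultimately show "\<exists>u v. u\<noteq>v \<and> e={u,v} \<and> u \<in> verts G \<and> v \<in> verts G" by blast
  qed
  have conn: "connected_graph G" using assms(2) G_def by simp
  have vL: "verts (line_graph G) = E" unfolding E_def line_graph_def verts_def by simp
  from assms(3) obtain a b where ab: "minimal_ab_separator (line_graph G) a b F"
    unfolding minimal_separator_def G_def by blast
  have reach_iff: "reachable (del_verts (line_graph G) U) x y \<longleftrightarrow> x \<in> E - U \<and> (x,y) \<in> (RR U)\<^sup>*" for U x y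
    unfolding reachable_def verts_del adj_del RR_def E_def by simp
  have sep: "F \<subseteq> E" "a \<in> E - F" "b \<in> E - F" "(a,b) \<notin> (RR F)\<^sup>*"
    using ab unfolding minimal_ab_separator_def separator_def vL reach_iff by auto
  have minW: "\<And>W. W \<subset> F \<Longrightarrow> \<not> separator (line_graph G) a b W"
    using ab unfolding minimal_ab_separator_def by blast
  have symR: "(x,y) \<in> (RR U)\<^sup>* \<Longrightarrow> (y,x) \<in> (RR U)\<^sup>*" for U x y
  proof -
    assume h: "(x,y) \<in> (RR U)\<^sup>*"
    have "sym (RR U)" unfolding RR_def sym_def LA_def by auto
    then have "sym ((RR U)\<^sup>*)" by (rule sym_rtrancl)
    then show ?thesis using h by (meson symD)
  qed
  have monoR: "U' \<subseteq> U \<Longrightarrow> (x,y)\<in>(RR U)\<^sup>* \<Longrightarrow> (x,y) \<in> (RR U')\<^sup>*" for U U' x y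
  proof -
    assume "U' \<subseteq> U" "(x,y)\<in>(RR U)\<^sup>*"
    moreover have "RR U \<subseteq> RR U'" using \<open>U' \<subseteq> U\<close> unfolding RR_def LA_def by auto
    ultimately show ?thesis using rtrancl_mono by blast
  qed
  define Sa where "Sa = {y. (a,y)\<in>(RR F)\<^sup>*}"
  define Sb where "Sb = {y. (b,y)\<in>(RR F)\<^sup>*}"
  have SaE: "Sa \<subseteq> E - F" using Rin sep(2) unfolding Sa_def RR_def by blast
  have SbE: "Sb \<subseteq> E - F" using Rin sep(3) unfolding Sb_def RR_def by blast
  have touch: "\<exists>ea eb. ea \<in> Sa \<and> eb \<in> Sb \<and> ea \<inter> f \<noteq> {} \<and> eb \<inter> f \<noteq> {}" if f: "f \<in> F" for f
  proof -
    have "F - {f} \<subset> F" using f by auto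
    then have "\<not> separator (line_graph G) a b (F - {f})" by (rule minW)
    then have ab': "(a,b) \<in> (RR (F-{f}))\<^sup>*"
      using sep unfolding separator_def vL reach_iff by auto
    have "(a,b) \<in> (RR F)\<^sup>* \<or> (\<exists>e. (a,e) \<in> (RR F)\<^sup>* \<and> e \<inter> f \<noteq> {})"
      using through[of a b E F f] ab' sep(2) f unfolding RR_def by blast
    then obtain ea where "ea \<in> Sa" "ea \<inter> f \<noteq> {}" using sep(4) unfolding Sa_def by blast
    have "(b,a) \<in> (RR F)\<^sup>* \<or> (\<exists>e. (b,e) \<in> (RR F)\<^sup>* \<and> e \<inter> f \<noteq> {})"
      using through[of b a E F f] symR[OF ab'] sep(3) f unfolding RR_def by blast
    moreover have "(b,a) \<notin> (RR F)\<^sup>*" using sep(4) symR by blast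
    ultimately obtain eb where "eb \<in> Sb" "eb \<inter> f \<noteq> {}" unfolding Sb_def by blast
    show ?thesis using \<open>ea \<in> Sa\<close> \<open>ea \<inter> f \<noteq> {}\<close> \<open>eb \<in> Sb\<close> \<open>eb \<inter> f \<noteq> {}\<close> by blast
  qed
  have mergeA: "g \<in> Sa" if "e \<in> Sa" "g \<in> E - F" "e \<inter> g \<noteq> {}" for e g
  proof (cases "e = g")
    case False
    then have "LA E F e g" using that SaE unfolding LA_def by auto
    then show ?thesis using that(1) unfolding Sa_def RR_def
      by (auto intro: rtrancl.rtrancl_into_rtrancl)
  qed (use that in auto)
  have mergeB: "g \<in> Sb" if "e \<in> Sb" "g \<in> E - F" "e \<inter> g \<noteq> {}" for e g
  proof (cases "e = g")
    case False
    then have "LA E F e g" using that SbE unfolding LA_def by auto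
    then show ?thesis using that(1) unfolding Sb_def RR_def
      by (auto intro: rtrancl.rtrancl_into_rtrancl)
  qed (use that in auto)
  have disj: "Sa \<inter> Sb = {}"
  proof (rule ccontr)
    assume "Sa \<inter> Sb \<noteq> {}"
    then obtain e where "(a,e) \<in> (RR F)\<^sup>*" "(b,e) \<in> (RR F)\<^sup>*" unfolding Sa_def Sb_def by blast
    then have "(a,b) \<in> (RR F)\<^sup>*" using symR by (meson rtrancl_trans)
    then show False using sep(4) by simp
  qed
  have endp: "g \<in> Sa \<union> Sb" if H: "f \<in> F" "z \<in> f" "g \<in> E - F" "z \<in> g" for f z g
  proof -
    obtain ea eb where e: "ea \<in> Sa" "eb \<in> Sb" "ea \<inter> f \<noteq> {}" "eb \<inter> f \<noteq> {}"
      using touch[OF H(1)] by blast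
    have fE: "f \<in> E" using sep(1) H(1) by blast
    obtain x y where f: "x \<noteq> y" "f = {x,y}" using bspec[OF simple fE] by blast
    obtain pa where pa: "pa \<in> ea" "pa \<in> f" using e(3) by blast
    obtain pb where pb: "pb \<in> eb" "pb \<in> f" using e(4) by blast
    have ebE: "eb \<in> E - F" using SbE e(2) by blast
    have "pa \<noteq> pb"
    proof
      assume "pa = pb"
      then have "ea \<inter> eb \<noteq> {}" using pa pb by blast
      then have "eb \<in> Sa" using mergeA[OF e(1) ebE] by blast
      then show False using disj e(2) by blast
    qed
    then have "z = pa \<or> z = pb" using f pa pb H(2) by auto
    then show ?thesis
    proof
      assume "z = pa"
      then have "ea \<inter> g \<noteq> {}" using pa H(4) by blast
      then show ?thesis using mergeA[OF e(1) H(3)] by blast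
    next
      assume "z = pb"
      then have "eb \<inter> g \<noteq> {}" using pb H(4) by blast
      then show ?thesis using mergeB[OF e(2) H(3)] by blast
    qed
  qed
  have cover: "E - F \<subseteq> Sa \<union> Sb"
  proof
    fix g assume g: "g \<in> E - F"
    show "g \<in> Sa \<union> Sb"
    proof (rule ccontr)
      assume gn: "g \<notin> Sa \<union> Sb"
      define X where "X = Sa \<union> Sb \<union> F"
      define Y where "Y = E - X"
      have dj: "y \<inter> x = {}" if "y \<in> Y" "x \<in> X" for x y
      proof (rule ccontr)
        assume "y \<inter> x \<noteq> {}"
        then obtain z where z: "z \<in> y" "z \<in> x" by blast
        have yEF: "y \<in> E - F" "y \<notin> Sa \<union> Sb" using that(1) unfolding Y_def X_def by auto
        from that(2) consider "x \<in> Sa" | "x \<in> Sb" | "x \<in> F" unfolding X_def by blast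
        then show False
        proof cases
          case 1 then show ?thesis using mergeA[OF 1 yEF(1)] z yEF(2) by blast
        next
          case 2 then show ?thesis using mergeB[OF 2 yEF(1)] z yEF(2) by blast
        next
          case 3 then show ?thesis using endp[OF 3 z(2) yEF(1) z(1)] yEF(2) by blast
        qed
      qed
      have gY: "g \<in> Y" using g gn unfolding Y_def X_def by auto
      obtain z z' where z: "z \<in> g" "z \<in> verts G" using simple g by blast
      obtain w w' where w: "w \<in> a" "w \<in> verts G" using simple sep(2) by blast
      have "(z,w) \<in> {(x,y). adj G x y}\<^sup>*" using conn z(2) w(2)
        unfolding connected_graph_def reachable_def by blast
      then have "w \<in> \<Union>Y"
      proof (induction rule: rtrancl_induct)
        case base then show ?case using z gY by blast
      next
        case (step u v)
        then obtain y where y: "y \<in> Y" "u \<in> y" by blast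
        have uv: "{u,v} \<in> E" using step(2) unfolding adj_def E_def by auto
        have "{u,v} \<notin> X" using dj[OF y(1)] y(2) by blast
        then have "{u,v} \<in> Y" using uv unfolding Y_def by blast
        then show ?case by blast
      qed
      moreover have "a \<in> X" unfolding X_def Sa_def by auto
      ultimately show False using dj w(1) by blast
    qed
  qed
  obtain f0 where f0: "f0 \<in> F" "f0 \<notin> F'" using F'F by blast
  have F'sub: "F' \<subseteq> F" using F'F by blast
  have stepR: "(x,e) \<in> (RR F')\<^sup>*" if "(x,d) \<in> (RR F')\<^sup>*" "LA E F' d e" for x d e
    using that unfolding RR_def by (auto intro: rtrancl.rtrancl_into_rtrancl)
  have SaR: "(a,e) \<in> (RR F')\<^sup>*" if "e \<in> Sa" for e
    using monoR[OF F'sub] that unfolding Sa_def by blast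
  have toa: "(a,e) \<in> (RR F')\<^sup>*" if e: "e \<in> E - F'" for e
  proof (cases "e \<in> F")
    case True
    obtain ea eb where t: "ea \<in> Sa" "ea \<inter> e \<noteq> {}" using touch[OF True] by blast
    have "LA E F' ea e" using t SaE e True F'sub unfolding LA_def by auto
    then show ?thesis using stepR SaR[OF t(1)] by blast
  next
    case False
    then have "e \<in> Sa \<union> Sb" using cover e by blast
    then show ?thesis
    proof
      assume "e \<in> Sa" then show ?thesis by (rule SaR)
    next
      assume eSb: "e \<in> Sb"
      obtain ea eb where t: "ea \<in> Sa" "eb \<in> Sb" "ea \<inter> f0 \<noteq> {}" "eb \<inter> f0 \<noteq> {}"
        using touch[OF f0(1)] by blast
      have l1: "LA E F' ea f0" using t SaE f0 F'sub sep(1) unfolding LA_def by auto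
      have l2: "LA E F' f0 eb" using t SbE f0 F'sub sep(1) unfolding LA_def by auto
      have "(a,eb) \<in> (RR F')\<^sup>*" using stepR[OF stepR[OF SaR[OF t(1)] l1] l2] .
      moreover have "(eb,e) \<in> (RR F)\<^sup>*" using t(2) eSb symR unfolding Sb_def
        by (meson mem_Collect_eq rtrancl_trans)
      then have "(eb,e) \<in> (RR F')\<^sup>*" using monoR[OF F'sub] by blast
      ultimately show ?thesis by (meson rtrancl_trans)
    qed
  qed
  show "connected_graph (del_verts (line_graph (display_graph P)) F')"
    unfolding connected_graph_def G_def[symmetric] reach_iff verts_del E_def[symmetric]
  proof (intro ballI conjI)
    fix u v assume u: "u \<in> E - F'" and v: "v \<in> E - F'"
    show "u \<in> E - F'" by (rule u)
    show "(u,v) \<in> (RR F')\<^sup>*" using symR[OF toa[OF u]] toa[OF v] by (meson rtrancl_trans)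
  qed
qed

end
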